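(* Let $c\ge2$, $k\ge c$, $s\ge1$ be integers and let $\lambda_1$ be the smallest normalized Laplacian eigenvalue of $\Gamma^c(s,k)$. Then the strong coloring number satisfies $\chi(\Gamma^c(s,k))=k=\dfrac{c-\lambda_1}{1-\lambda_1}$.
   Context: For integers $k\ge c\ge2$ and $s\ge1$, $\Gamma^c(s,k)$ is the unoriented hypergraph whose vertex set is the disjoint union of $k$ sets $V_1,\dots,V_k$ each of size $s$, and whose edges are exactly all subsets $e$ with $|e|=c$ and $|e\cap V_i|\le1$ for every $i$. For an unoriented hypergraph with every vertex of degree $\deg v=|\{e: v\in e\}|\ge1$, the adjacency matrix has $A_{v,v}=0$ and $A_{v,w}=-|\{e: v,w\in e\}|$ for $v\ne w$; the normalized Laplacian is $L=\mathrm{Id}-D^{-1}A$, $D=\mathrm{diag}(\deg v)$, with eigenvalues $\lambda_1\le\dots\le\lambda_N$. A proper strong $k$-coloring is a map $V\to\{1,\dots,k\}$ such that any two distinct vertices in a common edge receive different colors; $\chi$ is the least such $k$. *)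

theory Defs
  imports Complex_Main
begin

definition hdeg :: "'a set set \<Rightarrow> 'a \<Rightarrow> nat" where
  "hdeg E v = card {e \<in> E. v \<in> e}"

definition hadj :: "'a set set \<Rightarrow> 'a \<Rightarrow> 'a \<Rightarrow> real" where
  "hadj E v w = (if v = w then 0 else - real (card {e \<in> E. v \<in> e \<and> w \<in> e}))"

definition norm_lap :: "'a set set \<Rightarrow> 'a \<Rightarrow> 'a \<Rightarrow> real" where
  "norm_lap E v w = (if v = w then 1 else 0) - hadj E v w / real (hdeg E v)"

text \<open>Eigenvalues of the matrix norm_lap indexed by V (they are all real, as L is
similar to a symmetric matrix).\<close>
definition lap_eigenvalue :: "'a set \<Rightarrow> 'a set set \<Rightarrow> real \<Rightarrow> bool" where
  "lap_eigenvalue V E mu \<longleftrightarrow>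
     (\<exists>f :: 'a \<Rightarrow> real. (\<exists>v\<in>V. f v \<noteq> 0) \<and>
        (\<forall>v\<in>V. (\<Sum>w\<in>V. norm_lap E v w * f w) = mu * f v))"

definition smallest_lap_eigenvalue :: "'a set \<Rightarrow> 'a set set \<Rightarrow> real" where
  "smallest_lap_eigenvalue V E = Min {mu. lap_eigenvalue V E mu}"

definition strong_coloring :: "'a set \<Rightarrow> 'a set set \<Rightarrow> nat \<Rightarrow> ('a \<Rightarrow> nat) \<Rightarrow> bool" where
  "strong_coloring V E k col \<longleftrightarrow>
     (\<forall>v\<in>V. col v \<in> {1..k}) \<and>
     (\<forall>e\<in>E. \<forall>v\<in>e. \<forall>w\<in>e. v \<noteq> w \<longrightarrow> col v \<noteq> col w)"

definition strong_chromatic :: "'a set \<Rightarrow> 'a set set \<Rightarrow> nat" where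
  "strong_chromatic V E = (LEAST k. \<exists>col. strong_coloring V E k col)"

text \<open>The hypergraph Gamma^c(s,k): vertices (i,a) with i<k, a<s, so V_i = {i} x {0..<s};
edges: c-subsets meeting each V_i in at most one vertex.\<close>
definition Gamma_V :: "nat \<Rightarrow> nat \<Rightarrow> (nat \<times> nat) set" where
  "Gamma_V s k = {0..<k} \<times> {0..<s}"

definition Gamma_E :: "nat \<Rightarrow> nat \<Rightarrow> nat \<Rightarrow> (nat \<times> nat) set set" where
  "Gamma_E c s k = {e. e \<subseteq> Gamma_V s k \<and> card e = c \<and>
      (\<forall>i<k. card (e \<inter> ({i} \<times> {0..<s})) \<le> 1)}"

end

theory Submission
  imports Defs
begin

lemma finite_GV: "finite (Gamma_V s k)"
  by (simp add: Gamma_V_def)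

lemma finite_GE: "finite (Gamma_E c s k)"
proof -
  have "Gamma_E c s k \<subseteq> Pow (Gamma_V s k)" by (auto simp: Gamma_E_def)
  thus ?thesis using finite_GV by (meson finite_Pow_iff finite_subset)
qed

lemma exists_edge:
  assumes "c \<ge> 2" "k \<ge> c" "i < k" "j < k" "i \<noteq> j" "a < s" "b < s"
  shows "\<exists>e\<in>Gamma_E c s k. (i,a) \<in> e \<and> (j,b) \<in> e"
proof -
  have "card ({0..<k} - {i,j}) = k - 2"
    using assms by (subst card_Diff_subset) auto
  then obtain J where J: "J \<subseteq> {0..<k} - {i,j}" "card J = c - 2"
    using obtain_subset_with_card_n[of "c - 2" "{0..<k} - {i,j}"] assms by (metis diff_le_mono)
  have fJ: "finite J" using J(1) finite_subset by blast
  define e where "e = insert (i,a) (insert (j,b) ((\<lambda>x. (x,0::nat)) ` J))"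
  have "card e = c"
  proof -
    have "card ((\<lambda>x. (x,0::nat)) ` J) = c - 2"
      using J by (subst card_image) (auto simp: inj_on_def)
    moreover have "(j,b) \<notin> (\<lambda>x. (x,0::nat)) ` J" using J by auto
    moreover have "(i,a) \<notin> insert (j,b) ((\<lambda>x. (x,0::nat)) ` J)" using J assms by auto
    ultimately show ?thesis using fJ assms unfolding e_def by simp
  qed
  moreover have "e \<subseteq> Gamma_V s k" using J assms unfolding e_def Gamma_V_def by auto
  moreover have "card (e \<inter> ({x} \<times> {0..<s})) \<le> 1" if "x < k" for x
  proof -
    have "e \<inter> ({x} \<times> {0..<s}) \<subseteq> {if x = i then (i,a) else if x = j then (j,b) else (x,0)}"
      using J assms unfolding e_def by auto
    hence "card (e \<inter> ({x} \<times> {0..<s})) \<le> card {if x = i then (i,a) else if x = j then (j,b) else (x,0)}"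
      by (intro card_mono) auto
    thus ?thesis by simp
  qed
  ultimately have "e \<in> Gamma_E c s k" unfolding Gamma_E_def by auto
  thus ?thesis unfolding e_def by auto
qed

lemma same_class_codeg0:
  assumes "v \<noteq> w" "fst v = fst w" "v \<in> Gamma_V s k"
  shows "{e \<in> Gamma_E c s k. v \<in> e \<and> w \<in> e} = {}"
proof (rule ccontr)
  assume "{e \<in> Gamma_E c s k. v \<in> e \<and> w \<in> e} \<noteq> {}"
  then obtain e where e: "e \<in> Gamma_E c s k" "v \<in> e" "w \<in> e" by auto
  let ?C = "{fst v} \<times> {0..<s}"
  have "fst v < k" using assms(3) by (auto simp: Gamma_V_def)
  hence "card (e \<inter> ?C) \<le> 1" using e(1) by (auto simp: Gamma_E_def)
  moreover have "w \<in> Gamma_V s k" using e by (auto simp: Gamma_E_def)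
  hence "{v, w} \<subseteq> e \<inter> ?C" using e assms by (cases v; cases w; auto simp: Gamma_V_def)
  hence "card {v,w} \<le> card (e \<inter> ?C)" by (intro card_mono) auto
  ultimately show False using assms by simp
qed


lemma codeg_inv:
  assumes inv: "\<And>p. \<sigma> (\<sigma> p) = p" and pres: "\<And>e. e \<in> E \<Longrightarrow> \<sigma> ` e \<in> E"
    and "\<sigma> v = v" "\<sigma> w = w'"
  shows "card {e \<in> E. v \<in> e \<and> w \<in> e} = card {e \<in> E. v \<in> e \<and> w' \<in> e}"
proof -
  have ii: "inj \<sigma>" by (metis inv injI)
  have im: "\<sigma> ` (\<sigma> ` e) = e" for e using inv by (simp add: image_comp comp_def)
  have mem: "x \<in> \<sigma> ` e \<longleftrightarrow> \<sigma> x \<in> e" for x e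
    by (metis image_iff inv)
  have "{e \<in> E. v \<in> e \<and> w' \<in> e} = image \<sigma> ` {e \<in> E. v \<in> e \<and> w \<in> e}"
  proof (intro equalityI subsetI)
    fix e assume "e \<in> {e \<in> E. v \<in> e \<and> w' \<in> e}"
    hence "\<sigma> ` e \<in> {e \<in> E. v \<in> e \<and> w \<in> e}" using pres mem assms(3,4) inv by auto
    thus "e \<in> image \<sigma> ` {e \<in> E. v \<in> e \<and> w \<in> e}" using im by (metis image_eqI)
  next
    fix e assume "e \<in> image \<sigma> ` {e \<in> E. v \<in> e \<and> w \<in> e}"
    then obtain e0 where "e = \<sigma> ` e0" "e0 \<in> E" "v \<in> e0" "w \<in> e0" by auto
    thus "e \<in> {e \<in> E. v \<in> e \<and> w' \<in> e}" using pres assms(3,4) by force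
  qed
  moreover have "inj_on (image \<sigma>) X" for X using ii inj_on_image inj_on_subset subset_UNIV by metis
  ultimately show ?thesis by (simp add: card_image)
qed

definition sw :: "nat \<Rightarrow> nat \<Rightarrow> nat \<Rightarrow> nat" where
  "sw a b x = (if x = a then b else if x = b then a else x)"

lemma sw_sw[simp]: "sw a b (sw a b x) = x" by (auto simp: sw_def)

definition sig :: "nat \<Rightarrow> nat \<Rightarrow> nat \<Rightarrow> nat \<Rightarrow> nat \<times> nat \<Rightarrow> nat \<times> nat" where
  "sig j j' b b' p = (sw j j' (fst p), if fst p = j \<or> fst p = j' then sw b b' (snd p) else snd p)"

lemma sig_sig[simp]: "sig j j' b b' (sig j j' b b' p) = p"
  by (cases p) (auto simp: sig_def sw_def)

lemma sig_pres:
  assumes "j < k" "j' < k" "b < s" "b' < s" "e \<in> Gamma_E c s k"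
  shows "sig j j' b b' ` e \<in> Gamma_E c s k"
proof -
  let ?g = "sig j j' b b'"
  have ii: "inj ?g" by (metis sig_sig injI)
  have eV: "e \<subseteq> Gamma_V s k" and ce: "card e = c"
    and cl: "\<And>i. i < k \<Longrightarrow> card (e \<inter> ({i} \<times> {0..<s})) \<le> 1"
    using assms(5) by (auto simp: Gamma_E_def)
  have "?g ` e \<subseteq> Gamma_V s k"
    using eV assms(1-4) by (auto simp: Gamma_V_def sig_def sw_def)
  moreover have "card (?g ` e) = c" using ce ii by (simp add: card_image inj_on_subset)
  moreover have "card (?g ` e \<inter> ({x} \<times> {0..<s})) \<le> 1" if "x < k" for x
  proof -
    have "?g ` e \<inter> ({x} \<times> {0..<s}) \<subseteq> ?g ` (e \<inter> ({sw j j' x} \<times> {0..<s}))"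
    proof
      fix q assume "q \<in> ?g ` e \<inter> ({x} \<times> {0..<s})"
      hence "q \<in> ?g ` e" "fst q = x" by (simp_all add: mem_Times_iff)
      then obtain p where p: "p \<in> e" "q = ?g p" "fst q = x" by blast
      have "fst p = sw j j' x" using p by (auto simp: sig_def) 
      moreover have "p \<in> Gamma_V s k" using p eV by auto
      ultimately show "q \<in> ?g ` (e \<inter> ({sw j j' x} \<times> {0..<s}))"
        using p by (cases p) (auto simp: Gamma_V_def)
    qed
    hence "card (?g ` e \<inter> ({x} \<times> {0..<s})) \<le> card (?g ` (e \<inter> ({sw j j' x} \<times> {0..<s})))"
      by (intro card_mono) auto
    also have "\<dots> \<le> card (e \<inter> ({sw j j' x} \<times> {0..<s}))" by (rule card_image_le) auto
    also have "\<dots> \<le> 1" using cl that assms(1,2) by (auto simp: sw_def)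
    finally show ?thesis .
  qed
  ultimately show ?thesis by (auto simp: Gamma_E_def)
qed

lemma codeg_sym:
  assumes "i < k" "j < k" "j' < k" "i \<noteq> j" "i \<noteq> j'" "a < s" "b < s" "b' < s"
  shows "card {e \<in> Gamma_E c s k. (i,a) \<in> e \<and> (j,b) \<in> e}
       = card {e \<in> Gamma_E c s k. (i,a) \<in> e \<and> (j',b') \<in> e}"
proof (rule codeg_inv[where \<sigma>="sig j j' b b'"])
  show "\<And>e. e \<in> Gamma_E c s k \<Longrightarrow> sig j j' b b' ` e \<in> Gamma_E c s k"
    using assms by (intro sig_pres) auto
qed (use assms in \<open>auto simp: sig_def sw_def\<close>)


lemma double_count:
  assumes "v \<in> Gamma_V s k"
  shows "(\<Sum>w\<in>Gamma_V s k - {v}. card {e \<in> Gamma_E c s k. v \<in> e \<and> w \<in> e})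
         = (c - 1) * hdeg (Gamma_E c s k) v"
proof -
  let ?V = "Gamma_V s k" and ?E = "Gamma_E c s k"
  let ?P = "Sigma (?V - {v}) (\<lambda>w. {e \<in> ?E. v \<in> e \<and> w \<in> e})"
  let ?Q = "Sigma {e \<in> ?E. v \<in> e} (\<lambda>e. e - {v})"
  have fE: "finite ?E" by (rule finite_GE)
  have eV: "e \<subseteq> ?V" "card e = c" if "e \<in> ?E" for e using that by (auto simp: Gamma_E_def)
  have fe: "finite e" if "e \<in> ?E" for e using eV[OF that] finite_GV finite_subset by blast
  have "card ?P = (\<Sum>w\<in>?V - {v}. card {e \<in> ?E. v \<in> e \<and> w \<in> e})"
    using fE finite_GV by (intro card_SigmaI) auto
  moreover have "card ?Q = (\<Sum>e\<in>{e \<in> ?E. v \<in> e}. card (e - {v}))"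
    using fE fe by (intro card_SigmaI) auto
  moreover have "(\<Sum>e\<in>{e \<in> ?E. v \<in> e}. card (e - {v})) = (\<Sum>e\<in>{e \<in> ?E. v \<in> e}. c - 1)"
    using fe eV by (intro sum.cong) auto
  moreover have "?P = (\<lambda>(e,w). (w,e)) ` ?Q" using eV by auto
  moreover have "card ((\<lambda>(e,w). (w,e)) ` ?Q) = card ?Q"
    by (rule card_image) (auto simp: inj_on_def)
  ultimately show ?thesis by (simp add: hdeg_def mult.commute)
qed

lemma ratio:
  assumes c2: "c \<ge> 2" and kc: "k \<ge> c" and s1: "s \<ge> 1"
    and v: "v \<in> Gamma_V s k" and w: "w \<in> Gamma_V s k" and vw: "fst w \<noteq> fst v"
  shows "real (card {e \<in> Gamma_E c s k. v \<in> e \<and> w \<in> e}) / real (hdeg (Gamma_E c s k) v)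
         = (real c - 1) / ((real k - 1) * real s)"
    and "hdeg (Gamma_E c s k) v > 0"
proof -
  let ?V = "Gamma_V s k" and ?E = "Gamma_E c s k"
  obtain i a where va: "v = (i,a)" by (cases v)
  obtain j b where wb: "w = (j,b)" by (cases w)
  have ia: "i < k" "a < s" using v va by (auto simp: Gamma_V_def)
  have jb: "j < k" "b < s" using w wb by (auto simp: Gamma_V_def)
  have ij: "i \<noteq> j" using vw va wb by auto
  define t where "t = card {e \<in> ?E. v \<in> e \<and> w \<in> e}"
  have cw: "card {e \<in> ?E. v \<in> e \<and> w' \<in> e} = (if fst w' \<noteq> i then t else 0)"
    if "w' \<in> ?V - {v}" for w'
  proof (cases "fst w' = i")
    case True
    hence "{e \<in> ?E. v \<in> e \<and> w' \<in> e} = {}"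
      using same_class_codeg0[of v w' s k c] that va v by auto
    then show ?thesis using True by (simp only: card.empty) simp
  next
    case False
    obtain j' b' where "w' = (j',b')" by (cases w')
    then show ?thesis unfolding t_def va wb using False that ia jb ij
      by (auto simp: Gamma_V_def intro!: codeg_sym[symmetric])
  qed
  have "(\<Sum>w'\<in>?V - {v}. card {e \<in> ?E. v \<in> e \<and> w' \<in> e})
        = (\<Sum>w'\<in>?V - {v}. (if fst w' \<noteq> i then t else 0))"
    using cw by (rule sum.cong[OF refl])
  also have "\<dots> = (\<Sum>w'\<in>{w' \<in> ?V - {v}. fst w' \<noteq> i}. t)"
    using finite_GV by (subst sum.inter_filter) auto
  also have "{w' \<in> ?V - {v}. fst w' \<noteq> i} = ({0..<k} - {i}) \<times> {0..<s}"
    using va by (auto simp: Gamma_V_def)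
  also have "(\<Sum>w'\<in>({0..<k} - {i}) \<times> {0..<s}. t) = t * ((k - 1) * s)"
    using ia by (simp add: card_cartesian_product)
  finally have eq: "t * ((k - 1) * s) = (c - 1) * hdeg ?E v"
    using double_count[OF v, of c] by simp
  obtain e where "e \<in> ?E" "v \<in> e"
    using exists_edge[OF c2 kc ia(1) jb(1) ij ia(2) jb(2)] va by auto
  hence "{e \<in> ?E. v \<in> e} \<noteq> {}" by auto
  thus dpos: "hdeg ?E v > 0" unfolding hdeg_def using finite_GE
    by (simp add: card_gt_0_iff)
  have "real t * ((real k - 1) * real s) = (real c - 1) * real (hdeg ?E v)"
    using arg_cong[OF eq, of real] c2 kc by (simp add: of_nat_diff)
  moreover have "(real k - 1) * real s > 0" using c2 kc s1 by simp
  ultimately show "real (card {e \<in> ?E. v \<in> e \<and> w \<in> e}) / real (hdeg ?E v)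
         = (real c - 1) / ((real k - 1) * real s)"
    unfolding t_def[symmetric] using dpos s1 by (subst frac_eq_eq) (auto simp: mult.commute)
qed


lemma lap_formula:
  assumes c2: "c \<ge> 2" and kc: "k \<ge> c" and s1: "s \<ge> 1"
    and v: "v \<in> Gamma_V s k" and w: "w \<in> Gamma_V s k"
  shows "norm_lap (Gamma_E c s k) v w =
    (if w = v then 1 else if fst w = fst v then 0 else (real c - 1) / ((real k - 1) * real s))"
proof -
  consider "w = v" | "w \<noteq> v" "fst w = fst v" | "fst w \<noteq> fst v" by blast
  then show ?thesis
  proof cases
    case 1 then show ?thesis by (simp add: norm_lap_def hadj_def)
  next
    case 2
    hence "{e \<in> Gamma_E c s k. v \<in> e \<and> w \<in> e} = {}"
      using same_class_codeg0[of v w s k c] v by auto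
    hence "card {e \<in> Gamma_E c s k. v \<in> e \<and> w \<in> e} = 0" by (simp only: card.empty)
    then show ?thesis using 2 by (simp add: norm_lap_def hadj_def)
  next
    case 3
    hence "v \<noteq> w" by auto
    then show ?thesis using 3 ratio(1)[OF c2 kc s1 v w] by (auto simp: norm_lap_def hadj_def)
  qed
qed

lemma lap_sum:
  assumes c2: "c \<ge> 2" and kc: "k \<ge> c" and s1: "s \<ge> 1" and ia: "i < k" "a < s"
  shows "(\<Sum>w\<in>Gamma_V s k. norm_lap (Gamma_E c s k) (i,a) w * f w) =
    f (i,a) + (real c - 1) / ((real k - 1) * real s) *
      ((\<Sum>j<k. \<Sum>b<s. f (j,b)) - (\<Sum>b<s. f (i,b)))"
proof -
  let ?V = "Gamma_V s k" and ?al = "(real c - 1) / ((real k - 1) * real s)"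
  have v: "(i,a) \<in> ?V" using ia by (simp add: Gamma_V_def)
  have "(\<Sum>w\<in>?V. norm_lap (Gamma_E c s k) (i,a) w * f w) =
        (\<Sum>w\<in>?V. (if w = (i,a) then f w else 0) + ?al * (if fst w \<noteq> i then f w else 0))"
    by (rule sum.cong[OF refl]) (auto simp: lap_formula[OF c2 kc s1 v])
  also have "\<dots> = f (i,a) + ?al * (\<Sum>w\<in>{w \<in> ?V. fst w \<noteq> i}. f w)"
  proof -
    have fV: "finite ?V" by (rule finite_GV)
    have "\<And>al::real. (\<Sum>w\<in>?V. (if w = (i,a) then f w else 0) + al * (if fst w \<noteq> i then f w else 0))
       = f (i,a) + al * (\<Sum>w\<in>{w \<in> ?V. fst w \<noteq> i}. f w)"
      using v fV by (simp add: sum.distrib sum_distrib_left[symmetric] sum.inter_filter)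
    thus ?thesis by blast
  qed
  also have "{w \<in> ?V. fst w \<noteq> i} = ({0..<k} - {i}) \<times> {0..<s}" by (auto simp: Gamma_V_def)
  also have "(\<Sum>w\<in>({0..<k} - {i}) \<times> {0..<s}. f w) = (\<Sum>j\<in>{0..<k} - {i}. \<Sum>b<s. f (j,b))"
    by (simp add: sum.cartesian_product lessThan_atLeast0)
  also have "\<dots> = (\<Sum>j<k. \<Sum>b<s. f (j,b)) - (\<Sum>b<s. f (i,b))"
    using ia by (simp add: sum_diff1 lessThan_atLeast0)
  finally show ?thesis .
qed


lemma eig_char:
  assumes c2: "c \<ge> 2" and kc: "k \<ge> c" and s1: "s \<ge> 1"
    and ev: "lap_eigenvalue (Gamma_V s k) (Gamma_E c s k) mu"
  shows "mu = 1 \<or> mu = 1 - (real c - 1) / (real k - 1) \<or> mu = real c"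
proof (rule ccontr)
  assume nc: "\<not> ?thesis"
  hence mu1: "mu \<noteq> 1" by auto
  let ?al = "(real c - 1) / ((real k - 1) * real s)"
  define be where "be = (real c - 1) / (real k - 1)"
  have sal: "real s * ?al = be" using s1 by (simp add: be_def)
  have kb: "(real k - 1) * be = real c - 1" using c2 kc by (simp add: be_def)
  obtain f where f0: "\<exists>v\<in>Gamma_V s k. f v \<noteq> 0"
    and fe: "\<And>v. v \<in> Gamma_V s k \<Longrightarrow> (\<Sum>w\<in>Gamma_V s k. norm_lap (Gamma_E c s k) v w * f w) = mu * f v"
    using ev unfolding lap_eigenvalue_def by blast
  define R where "R j = (\<Sum>b<s. f (j,b))" for j
  define T where "T = (\<Sum>j<k. R j)"
  have H: "mu * f (i,a) = f (i,a) + ?al * (T - R i)" if "i < k" "a < s" for i a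
    using fe[of "(i,a)"] lap_sum[OF c2 kc s1 that, of f] that
    by (simp add: Gamma_V_def R_def T_def)
  have HR: "mu * R i = R i + be * (T - R i)" if "i < k" for i
  proof -
    have "(\<Sum>a<s. mu * f (i,a)) = (\<Sum>a<s. f (i,a) + ?al * (T - R i))"
      using H[OF that] by (intro sum.cong) auto
    thus ?thesis using sal[symmetric]
      by (simp add: R_def sum.distrib sum_distrib_left[symmetric] mult.assoc)
  qed
  have "(\<Sum>i<k. mu * R i) = (\<Sum>i<k. R i + be * (T - R i))"
    using HR by (intro sum.cong) auto
  hence "mu * T = T + be * (real k * T - T)"
    by (simp add: T_def sum.distrib sum_distrib_left[symmetric] sum_subtractf)
  moreover have "be * (real k * T - T) = ((real k - 1) * be) * T" by (simp add: algebra_simps)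
  ultimately have "mu * T = T + (real c - 1) * T" using kb by simp
  hence "(mu - real c) * T = 0" by (simp add: algebra_simps)
  hence T0: "T = 0" using nc by auto
  have "R i = 0" if "i < k" for i
  proof -
    have "(mu - (1 - be)) * R i = 0" using HR[OF that] T0 by (simp add: algebra_simps)
    thus ?thesis using nc by (auto simp: be_def)
  qed
  hence "f v = 0" if vV: "v \<in> Gamma_V s k" for v
  proof -
    obtain i a where "v = (i,a)" "i < k" "a < s" using vV by (cases v) (auto simp: Gamma_V_def)
    moreover have "(mu - 1) * f (i,a) = 0" using H[OF \<open>i<k\<close> \<open>a<s\<close>] T0 \<open>\<And>i. i < k \<Longrightarrow> R i = 0\<close>[OF \<open>i<k\<close>]
      by (simp add: algebra_simps)
    ultimately show ?thesis using mu1 by simp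
  qed
  thus False using f0 by blast
qed

lemma eig_exists:
  assumes c2: "c \<ge> 2" and kc: "k \<ge> c" and s1: "s \<ge> 1"
  shows "lap_eigenvalue (Gamma_V s k) (Gamma_E c s k) (1 - (real c - 1) / (real k - 1))"
proof -
  let ?al = "(real c - 1) / ((real k - 1) * real s)"
  define g :: "nat \<Rightarrow> real" where "g j = (if j = 0 then 1 else 0) - (if j = 1 then 1 else 0)" for j
  define f :: "nat \<times> nat \<Rightarrow> real" where "f p = g (fst p)" for p
  have k2: "1 < k" using c2 kc by simp
  have R: "(\<Sum>b<s. f (j,b)) = real s * g j" for j by (simp add: f_def)
  have T: "(\<Sum>j<k. real s * g j) = 0" using k2
    by (simp add: g_def sum_subtractf sum_distrib_left[symmetric])
  have sal: "real s * ?al = (real c - 1) / (real k - 1)" using s1 by simp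
  show ?thesis unfolding lap_eigenvalue_def
  proof (intro exI conjI ballI)
    show "\<exists>v\<in>Gamma_V s k. f v \<noteq> 0"
      using k2 s1 by (intro bexI[of _ "(0,0)"]) (auto simp: Gamma_V_def f_def g_def)
  next
    fix v assume "v \<in> Gamma_V s k"
    then obtain i a where v: "v = (i,a)" "i < k" "a < s" by (auto simp: Gamma_V_def)
    have "(\<Sum>w\<in>Gamma_V s k. norm_lap (Gamma_E c s k) v w * f w) = g i - ?al * (real s * g i)"
      using lap_sum[OF c2 kc s1 v(2,3), of f] v(1) by (simp add: R T f_def)
    also have "\<dots> = g i - (real s * ?al) * g i" by (simp only: mult_ac)
    also have "\<dots> = (1 - (real c - 1) / (real k - 1)) * f v"
      unfolding sal using v(1) by (simp add: f_def algebra_simps)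
    finally show "(\<Sum>w\<in>Gamma_V s k. norm_lap (Gamma_E c s k) v w * f w) = (1 - (real c - 1) / (real k - 1)) * f v" .
  qed
qed


lemma chrom:
  assumes c2: "c \<ge> 2" and kc: "k \<ge> c" and s1: "s \<ge> 1"
  shows "strong_chromatic (Gamma_V s k) (Gamma_E c s k) = k"
  unfolding strong_chromatic_def
proof (rule Least_equality)
  let ?col = "\<lambda>p::nat\<times>nat. fst p + 1"
  show "\<exists>col. strong_coloring (Gamma_V s k) (Gamma_E c s k) k col"
  proof (intro exI[of _ ?col])
    have "?col v \<noteq> ?col w" if e: "e \<in> Gamma_E c s k" "v \<in> e" "w \<in> e" "v \<noteq> w" for e v w
    proof
      assume "?col v = ?col w"
      hence "fst v = fst w" by simp
      moreover have "v \<in> Gamma_V s k" using e by (auto simp: Gamma_E_def)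
      ultimately show False using same_class_codeg0[of v w s k c] e by auto
    qed
    thus "strong_coloring (Gamma_V s k) (Gamma_E c s k) k ?col"
      unfolding strong_coloring_def by (auto simp: Gamma_V_def)
  qed
next
  fix k' assume "\<exists>col. strong_coloring (Gamma_V s k) (Gamma_E c s k) k' col"
  then obtain col where col: "strong_coloring (Gamma_V s k) (Gamma_E c s k) k' col" by blast
  let ?h = "\<lambda>i. col (i, 0)"
  have "inj_on ?h {0..<k}"
  proof (rule inj_onI)
    fix i j assume "i \<in> {0..<k}" "j \<in> {0..<k}" "?h i = ?h j"
    show "i = j"
    proof (rule ccontr)
      assume "i \<noteq> j"
      moreover have "i < k" "j < k" "0 < s" using \<open>i \<in> {0..<k}\<close> \<open>j \<in> {0..<k}\<close> s1 by auto
      ultimately obtain e where "e \<in> Gamma_E c s k" "(i,0) \<in> e" "(j,0) \<in> e"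
        using exists_edge[OF c2 kc \<open>i < k\<close> \<open>j < k\<close> \<open>i \<noteq> j\<close> \<open>0 < s\<close> \<open>0 < s\<close>] by blast
      moreover have "\<forall>e\<in>Gamma_E c s k. \<forall>v\<in>e. \<forall>w\<in>e. v \<noteq> w \<longrightarrow> col v \<noteq> col w"
        using col unfolding strong_coloring_def by (elim conjE)
      ultimately have "col (i,0) \<noteq> col (j,0)" using \<open>i \<noteq> j\<close> by simp
      thus False using \<open>?h i = ?h j\<close> by simp
    qed
  qed
  moreover have "?h ` {0..<k} \<subseteq> {1..k'}"
    using col s1 unfolding strong_coloring_def Gamma_V_def by auto
  ultimately have "card {0..<k} \<le> card {1..k'}" by (metis card_inj_on_le finite_atLeastAtMost)
  thus "k \<le> k'" by simp
qed

theorem mainTheorem5: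
  fixes c s k :: nat
  assumes "c \<ge> 2" and "k \<ge> c" and "s \<ge> 1"
  shows "strong_chromatic (Gamma_V s k) (Gamma_E c s k) = k \<and>
         real k = (real c - smallest_lap_eigenvalue (Gamma_V s k) (Gamma_E c s k))
                  / (1 - smallest_lap_eigenvalue (Gamma_V s k) (Gamma_E c s k))"
proof
  show "strong_chromatic (Gamma_V s k) (Gamma_E c s k) = k" using chrom assms by blast
next
  define l where "l = 1 - (real c - 1) / (real k - 1)"
  let ?S = "{mu. lap_eigenvalue (Gamma_V s k) (Gamma_E c s k) mu}"
  have sub: "?S \<subseteq> {1, l, real c}" using eig_char[OF assms] by (auto simp: l_def)
  have lin: "l \<in> ?S" using eig_exists[OF assms] by (simp add: l_def)
  have be: "0 \<le> (real c - 1) / (real k - 1)" using assms by simp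
  have "l \<le> y" if "y \<in> ?S" for y
  proof -
    have "y = 1 \<or> y = l \<or> y = real c" using sub that by blast
    moreover have "l \<le> 1" using be by (simp add: l_def)
    moreover have "(1::real) \<le> real c" using assms by simp
    ultimately show ?thesis by auto
  qed
  moreover have "finite ?S" using finite_subset[OF sub] by simp
  ultimately have "Min ?S = l" using lin by (intro Min_eqI) blast+
  hence sm: "smallest_lap_eigenvalue (Gamma_V s k) (Gamma_E c s k) = l"
    by (simp add: smallest_lap_eigenvalue_def)
  have k1: "real k - 1 > 0" "real c - 1 > 0" using assms by auto
  show "real k = (real c - smallest_lap_eigenvalue (Gamma_V s k) (Gamma_E c s k))
                  / (1 - smallest_lap_eigenvalue (Gamma_V s k) (Gamma_E c s k))"
  proof -
    define b where "b = (real c - 1) / (real k - 1)"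
    have b0: "b > 0" using k1 by (simp add: b_def)
    have "real c - 1 = b * (real k - 1)" using k1 by (simp add: b_def)
    hence "real c - l = real k * b" by (simp add: l_def b_def[symmetric] algebra_simps)
    moreover have "1 - l = b" by (simp add: l_def b_def)
    ultimately show ?thesis unfolding sm using b0 by simp
  qed
qed

end
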